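(* There is a partial order $(P,\leq_P)$, with first, second and third levels $P_1,P_2,P_3$, such that: (1) $P$ is locally countable, has size continuum and has height three; (2) $P_1$ has size continuum; (3) every countable subset of $P_1$ has an upper bound in $P_2$; (4) for every finite subset $Q$ of $P_1\cup P_2$ and every $q\in P_2$ not equal to any element of $Q$, there is an element of $P_3$ which is above every element of $Q$ but not above $q$.
   Context: A partial order is locally countable if every element has at most countably many strict predecessors; it has height $n$ if its longest chain has length exactly $n$. For a partial order of height three, the first level consists of elements with no strict predecessors, the second level of elements not in the first level whose strict predecessors all lie in the first level, and the third level of the remaining elements (those not in the first two levels, all of whose strict predecessors lie in the first two levels). *)

theory Defs
  imports Complex_Main "HOL-Library.Countable_Set" "HOL-Library.Equipollence"
begin

definition strict_preds :: "'a set \<Rightarrow> 'a rel \<Rightarrow> 'a \<Rightarrow> 'a set" where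
  "strict_preds P r x = {y \<in> P. (y, x) \<in> r \<and> y \<noteq> x}"

definition locally_countable :: "'a set \<Rightarrow> 'a rel \<Rightarrow> bool" where
  "locally_countable P r \<longleftrightarrow> (\<forall>x\<in>P. countable (strict_preds P r x))"

definition is_chain :: "'a set \<Rightarrow> 'a rel \<Rightarrow> 'a set \<Rightarrow> bool" where
  "is_chain P r C \<longleftrightarrow> C \<subseteq> P \<and> (\<forall>x\<in>C. \<forall>y\<in>C. (x, y) \<in> r \<or> (y, x) \<in> r)"

definition has_height :: "'a set \<Rightarrow> 'a rel \<Rightarrow> nat \<Rightarrow> bool" where
  "has_height P r n \<longleftrightarrow>
     (\<exists>C. is_chain P r C \<and> finite C \<and> card C = n) \<and>
     (\<forall>C. is_chain P r C \<longrightarrow> finite C \<and> card C \<le> n)"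

definition level1 :: "'a set \<Rightarrow> 'a rel \<Rightarrow> 'a set" where
  "level1 P r = {x \<in> P. strict_preds P r x = {}}"

definition level2 :: "'a set \<Rightarrow> 'a rel \<Rightarrow> 'a set" where
  "level2 P r = {x \<in> P - level1 P r. strict_preds P r x \<subseteq> level1 P r}"

definition level3 :: "'a set \<Rightarrow> 'a rel \<Rightarrow> 'a set" where
  "level3 P r = {x \<in> P - (level1 P r \<union> level2 P r).
                   strict_preds P r x \<subseteq> level1 P r \<union> level2 P r}"

end

theory Submission
  imports Defs "HOL-Analysis.Analysis"
begin

locale tr =
  fixes f :: "'a \<Rightarrow> 'b" and R :: "'a rel"
  assumes inj: "inj f"
begin

definition "rr = map_prod f f ` R"

lemma rr_iff[simp]: "(f a, f b) \<in> rr \<longleftrightarrow> (a, b) \<in> R"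
  unfolding rr_def using inj by (auto simp: inj_def)

lemma rr_in: "p \<in> rr \<Longrightarrow> \<exists>a b. p = (f a, f b) \<and> (a, b) \<in> R"
  unfolding rr_def by auto

lemma sp: "strict_preds (range f) rr (f a) = f ` strict_preds UNIV R a"
  unfolding strict_preds_def using inj by (auto simp: inj_eq)

lemma l1: "level1 (range f) rr = f ` level1 UNIV R"
  unfolding level1_def using sp by auto

lemma l2: "level2 (range f) rr = f ` level2 UNIV R"
proof -
  have "x \<in> level2 (range f) rr \<longleftrightarrow> x \<in> f ` level2 UNIV R" for x
  proof (cases "x \<in> range f")
    case True
    then obtain a where x: "x = f a" by blast
    have "x \<in> level2 (range f) rr \<longleftrightarrow> f a \<notin> f ` level1 UNIV R \<and> f ` strict_preds UNIV R a \<subseteq> f ` level1 UNIV R"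
      unfolding level2_def l1 x by (simp add: sp)
    also have "\<dots> \<longleftrightarrow> a \<in> level2 UNIV R"
      unfolding level2_def using inj by (simp add: inj_image_mem_iff inj_image_subset_iff)
    also have "\<dots> \<longleftrightarrow> x \<in> f ` level2 UNIV R" unfolding x using inj by (simp add: inj_image_mem_iff)
    finally show ?thesis .
  next
    case False then show ?thesis unfolding level2_def by auto
  qed
  then show ?thesis by (rule set_eqI)
qed

lemma l3: "level3 (range f) rr = f ` level3 UNIV R"
proof -
  have "x \<in> level3 (range f) rr \<longleftrightarrow> x \<in> f ` level3 UNIV R" for x
  proof (cases "x \<in> range f")
    case True
    then obtain a where x: "x = f a" by blast
    have "x \<in> level3 (range f) rr \<longleftrightarrow> f a \<notin> f ` (level1 UNIV R \<union> level2 UNIV R) \<and> f ` strict_preds UNIV R a \<subseteq> f ` (level1 UNIV R \<union> level2 UNIV R)"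
      unfolding level3_def l1 l2 x image_Un by (simp add: sp)
    also have "\<dots> \<longleftrightarrow> a \<in> level3 UNIV R"
      unfolding level3_def using inj by (simp add: inj_image_mem_iff inj_image_subset_iff)
    also have "\<dots> \<longleftrightarrow> x \<in> f ` level3 UNIV R" unfolding x using inj by (simp add: inj_image_mem_iff)
    finally show ?thesis .
  next
    case False then show ?thesis unfolding level3_def by auto
  qed
  then show ?thesis by (rule set_eqI)
qed

lemma po: assumes "partial_order_on UNIV R" shows "partial_order_on (range f) rr"
proof -
  have r: "(a, a) \<in> R" and t: "(a, b) \<in> R \<Longrightarrow> (b, c) \<in> R \<Longrightarrow> (a, c) \<in> R"
    and an: "(a, b) \<in> R \<Longrightarrow> (b, a) \<in> R \<Longrightarrow> a = b" for a b c
    using assms unfolding partial_order_on_def preorder_on_def refl_on_def trans_def antisym_def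
    by blast+
  show ?thesis
    unfolding partial_order_on_def preorder_on_def refl_on_def trans_def antisym_def
  proof (intro conjI ballI allI impI)
    show "rr \<subseteq> range f \<times> range f" unfolding rr_def by auto
  next
    fix x assume "x \<in> range f" then show "(x, x) \<in> rr" using r by auto
  next
    fix x y z assume "(x, y) \<in> rr" "(y, z) \<in> rr"
    then obtain a b b' c where "x = f a" "y = f b" "(a, b) \<in> R" "y = f b'" "z = f c" "(b', c) \<in> R"
      using rr_in by blast
    then show "(x, z) \<in> rr" using t inj by (auto simp: inj_eq)
  next
    fix x y assume "(x, y) \<in> rr" "(y, x) \<in> rr"
    then obtain a b a' b' where "x = f a" "y = f b" "(a, b) \<in> R" "y = f b'" "x = f a'" "(b', a') \<in> R"
      using rr_in by blast
    then show "x = y" using an inj by (auto simp: inj_eq)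
  qed
qed

lemma lc: "locally_countable UNIV R \<Longrightarrow> locally_countable (range f) rr"
  unfolding locally_countable_def using sp by auto

lemma chain1: assumes "is_chain UNIV R C" shows "is_chain (range f) rr (f ` C)"
  unfolding is_chain_def
proof (intro conjI ballI)
  fix x y assume "x \<in> f ` C" "y \<in> f ` C"
  then obtain a b where "x = f a" "y = f b" "a \<in> C" "b \<in> C" by blast
  then show "(x, y) \<in> rr \<or> (y, x) \<in> rr" using assms unfolding is_chain_def by simp
qed blast

lemma chain2: assumes "is_chain (range f) rr C" shows "is_chain UNIV R (f -` C) \<and> C = f ` (f -` C)"
proof
  show "is_chain UNIV R (f -` C)" unfolding is_chain_def
  proof (intro conjI ballI)
    fix x y assume "x \<in> f -` C" "y \<in> f -` C"
    then have "f x \<in> C" "f y \<in> C" by auto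
    moreover have "\<forall>x\<in>C. \<forall>y\<in>C. (x, y) \<in> rr \<or> (y, x) \<in> rr" using assms by (simp add: is_chain_def)
    ultimately have "(f x, f y) \<in> rr \<or> (f y, f x) \<in> rr" by blast
    then show "(x, y) \<in> R \<or> (y, x) \<in> R" by simp
  qed blast
  have "C \<subseteq> range f" using assms by (simp add: is_chain_def)
  then show "C = f ` (f -` C)" by blast
qed

lemma card_img: "card (f ` X) = card X"
  by (rule card_image[OF inj_on_subset[OF inj subset_UNIV]])

lemma height: assumes "has_height UNIV R n" shows "has_height (range f) rr n"
proof -
  obtain C0 where C0: "is_chain UNIV R C0" "finite C0" "card C0 = n" using assms unfolding has_height_def by blast
  have H: "\<And>C. is_chain UNIV R C \<Longrightarrow> finite C \<and> card C \<le> n" using assms unfolding has_height_def by blast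
  have e: "is_chain (range f) rr (f ` C0) \<and> finite (f ` C0) \<and> card (f ` C0) = n"
    using chain1[OF C0(1)] C0(2,3) card_img[of C0] by simp
  have a: "finite C \<and> card C \<le> n" if c: "is_chain (range f) rr C" for C
  proof -
    have c2: "is_chain UNIV R (f -` C)" "C = f ` (f -` C)" using chain2[OF c] by auto
    have "finite (f -` C) \<and> card (f -` C) \<le> n" using H[OF c2(1)] .
    then show ?thesis using c2(2) card_img[of "f -` C"] by (metis finite_imageI)
  qed
  show ?thesis unfolding has_height_def using e a by blast
qed

end

datatype node = NA "nat set" | NB "nat \<Rightarrow> nat set"
  | NC nat "nat \<Rightarrow> nat set" nat "nat \<Rightarrow> nat \<Rightarrow> nat set"

fun below :: "node \<Rightarrow> node \<Rightarrow> bool" where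
  "below (NA s) (NB f) = (s \<in> range f)"
| "below (NA s) (NC n g m h) = ((\<exists>i<n. s = g i) \<or> (\<exists>j\<le>m. s \<in> range (h j)))"
| "below (NB f) (NC n g m h) = (\<exists>j\<le>m. f = h j)"
| "below _ _ = False"

definition R :: "node rel" where "R = {(x,y). x = y \<or> below x y}"

lemma R_iff: "(x,y) \<in> R \<longleftrightarrow> x = y \<or> below x y" by (simp add: R_def)

lemma po: "partial_order_on UNIV R"
  unfolding partial_order_on_def preorder_on_def refl_on_def trans_def antisym_def R_iff
  apply (intro conjI allI impI ballI; simp?)
  subgoal for x y z by (cases x; cases y; cases z; auto)
  subgoal for x y by (cases x; cases y; auto)
  done

lemma sp_A: "strict_preds UNIV R (NA s) = {}"
proof -
  have "y \<notin> strict_preds UNIV R (NA s)" for y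
    by (cases y) (simp_all add: strict_preds_def R_iff)
  then show ?thesis by blast
qed

lemma sp_B: "strict_preds UNIV R (NB f) = NA ` range f"
proof -
  have "y \<in> strict_preds UNIV R (NB f) \<longleftrightarrow> y \<in> NA ` range f" for y
    by (cases y) (auto simp add: strict_preds_def R_iff)
  then show ?thesis by (rule set_eqI)
qed

lemma sp_C: "strict_preds UNIV R (NC n g m h) = NA ` (g ` {..<n}) \<union> NA ` (\<Union>j\<le>m. range (h j)) \<union> NB ` (h ` {..m})"
proof -
  have "y \<in> strict_preds UNIV R (NC n g m h) \<longleftrightarrow> y \<in> NA ` (g ` {..<n}) \<union> NA ` (\<Union>j\<le>m. range (h j)) \<union> NB ` (h ` {..m})" for y
  proof (cases y)
    case (NA s)
    have "y \<in> strict_preds UNIV R (NC n g m h) \<longleftrightarrow> ((\<exists>i<n. s = g i) \<or> (\<exists>j\<le>m. s \<in> range (h j)))"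
      by (simp add: NA strict_preds_def R_iff)
    also have "\<dots> \<longleftrightarrow> y \<in> NA ` (g ` {..<n}) \<union> NA ` (\<Union>j\<le>m. range (h j)) \<union> NB ` (h ` {..m})"
      unfolding NA by auto
    finally show ?thesis .
  next
    case (NB f)
    have "y \<in> strict_preds UNIV R (NC n g m h) \<longleftrightarrow> (\<exists>j\<le>m. f = h j)"
      by (simp add: NB strict_preds_def R_iff)
    also have "\<dots> \<longleftrightarrow> y \<in> NA ` (g ` {..<n}) \<union> NA ` (\<Union>j\<le>m. range (h j)) \<union> NB ` (h ` {..m})"
      unfolding NB by auto
    finally show ?thesis .
  next
    case (NC n' g' m' h')
    then show ?thesis by (simp add: strict_preds_def R_iff image_iff)
  qed
  then show ?thesis by (rule set_eqI)
qed

lemma lev1: "level1 UNIV R = range NA"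
proof -
  have "x \<in> level1 UNIV R \<longleftrightarrow> x \<in> range NA" for x
    by (cases x) (auto simp: level1_def sp_A sp_B sp_C)
  then show ?thesis by (rule set_eqI)
qed

lemma lev2: "level2 UNIV R = range NB"
proof -
  have "x \<in> level2 UNIV R \<longleftrightarrow> x \<in> range NB" for x
  proof (cases x)
    case (NC n g m h)
    have "NB (h 0) \<in> strict_preds UNIV R x" "NB (h 0) \<notin> level1 UNIV R"
      using NC by (auto simp: sp_C lev1)
    then show ?thesis using NC by (auto simp: level2_def)
  qed (auto simp: level2_def lev1 sp_A sp_B)
  then show ?thesis by (rule set_eqI)
qed

lemma lev3: "level3 UNIV R = {x. \<exists>n g m h. x = NC n g m h}"
proof -
  have "x \<in> level3 UNIV R \<longleftrightarrow> x \<in> {x. \<exists>n g m h. x = NC n g m h}" for x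
  proof (cases x)
    case (NC n g m h)
    then show ?thesis by (auto simp: level3_def lev1 lev2 sp_C)
  qed (auto simp: level3_def lev1 lev2)
  then show ?thesis by (rule set_eqI)
qed

lemma lc: "locally_countable UNIV R"
  unfolding locally_countable_def
proof
  fix x :: node show "countable (strict_preds UNIV R x)"
    by (cases x) (auto simp: sp_A sp_B sp_C)
qed

lemma sub1: assumes "\<forall>x\<in>S. \<forall>y\<in>S. x = y" shows "finite S \<and> card S \<le> 1"
proof (cases "S = {}")
  case False
  then obtain x where "x \<in> S" by blast
  with assms have "S = {x}" by blast
  then show ?thesis by simp
qed simp

lemma chain_cmp: "is_chain UNIV R C \<Longrightarrow> x\<in>C \<Longrightarrow> y\<in>C \<Longrightarrow> x = y \<or> below x y \<or> below y x"
  unfolding is_chain_def R_iff by blast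

lemma height: "has_height UNIV R 3"
  unfolding has_height_def
proof (intro conjI allI impI)
  let ?C = "{NA {}, NB (\<lambda>_. {}), NC 0 (\<lambda>_. {}) 0 (\<lambda>_ _. {})}"
  show "\<exists>C. is_chain UNIV R C \<and> finite C \<and> card C = 3"
    by (rule exI[of _ ?C]) (auto simp: is_chain_def R_iff)
next
  fix C assume ch: "is_chain UNIV R C"
  let ?a = "C \<inter> range NA" and ?b = "C \<inter> range NB" and ?c = "C \<inter> {x. \<exists>n g m h. x = NC n g m h}"
  have a: "finite ?a \<and> card ?a \<le> 1"
  proof (rule sub1, intro ballI)
    fix x y assume "x \<in> ?a" "y \<in> ?a"
    then show "x = y" using chain_cmp[OF ch, of x y] by auto
  qed
  have b: "finite ?b \<and> card ?b \<le> 1"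
  proof (rule sub1, intro ballI)
    fix x y assume "x \<in> ?b" "y \<in> ?b"
    then show "x = y" using chain_cmp[OF ch, of x y] by auto
  qed
  have c: "finite ?c \<and> card ?c \<le> 1"
  proof (rule sub1, intro ballI)
    fix x y assume "x \<in> ?c" "y \<in> ?c"
    then show "x = y" using chain_cmp[OF ch, of x y] by auto
  qed
  have eq: "C = ?a \<union> ?b \<union> ?c"
  proof (intro equalityI subsetI)
    fix x assume "x \<in> C" then show "x \<in> ?a \<union> ?b \<union> ?c" by (cases x) auto
  qed auto
  have ceq: "card C = card (?a \<union> ?b \<union> ?c)" by (rule arg_cong[OF eq])
  have "finite (?a \<union> ?b \<union> ?c)" using a b c by blast
  then show "finite C" using eq by (rule ssubst[where P=finite, rotated])
  have "card C \<le> card (?a \<union> ?b) + card ?c" unfolding ceq by (rule card_Un_le)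
  also have "card (?a \<union> ?b) \<le> card ?a + card ?b" by (rule card_Un_le)
  finally show "card C \<le> 3" using a b c by linarith
qed



lemma cond3: "\<forall>A. A \<subseteq> range NA \<and> countable A \<longrightarrow> (\<exists>u\<in>range NB. \<forall>a\<in>A. (a, u) \<in> R)"
proof (intro allI impI)
  fix A assume H: "A \<subseteq> range NA \<and> countable A"
  define S where "S = NA -` A"
  have AS: "A = NA ` S" using H unfolding S_def by blast
  have cS: "countable S" using H AS by (metis countable_image_inj_on inj_onI node.inject(1))
  show "\<exists>u\<in>range NB. \<forall>a\<in>A. (a, u) \<in> R"
  proof (cases "S = {}")
    case True then show ?thesis using AS by auto
  next
    case False
    have "range (from_nat_into S) = S" using range_from_nat_into[OF False cS] .
    then show ?thesis using AS
      by (intro bexI[of _ "NB (from_nat_into S)"]) (auto simp: R_iff)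
  qed
qed

lemma cond4: "\<forall>Q q. finite Q \<and> Q \<subseteq> range NA \<union> range NB \<and> q \<in> range NB \<and> q \<notin> Q \<longrightarrow>
          (\<exists>z\<in>{x. \<exists>n g m h. x = NC n g m h}. (\<forall>x\<in>Q. (x, z) \<in> R) \<and> (q, z) \<notin> R)"
proof (intro allI impI)
  fix Q q assume H: "finite Q \<and> Q \<subseteq> range NA \<union> range NB \<and> q \<in> range NB \<and> q \<notin> Q"
  then obtain fq where q: "q = NB fq" by blast
  have fS: "finite (NA -` Q)" using H by (intro finite_vimageI) (auto simp: inj_def)
  have fT: "finite (NB -` Q)" using H by (intro finite_vimageI) (auto simp: inj_def)
  obtain xs where xs: "set xs = NA -` Q" using finite_list[OF fS] by blast
  obtain ys where ys: "set ys = NB -` Q" using finite_list[OF fT] by blast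
  define w where "w = (\<lambda>n. - fq n)"
  have wne: "w \<noteq> fq"
  proof
    assume "w = fq"
    then have "w 0 = fq 0" by simp
    then have "- fq 0 = fq 0" by (simp add: w_def)
    then show False by (metis Compl_iff)
  qed
  define z where "z = NC (length xs) (\<lambda>i. xs ! i) (length ys) (\<lambda>j. (if j < length ys then ys ! j else w))"
  show "\<exists>z\<in>{x. \<exists>n g m h. x = NC n g m h}. (\<forall>x\<in>Q. (x, z) \<in> R) \<and> (q, z) \<notin> R"
  proof (intro bexI[of _ z] conjI ballI)
    show "z \<in> {x. \<exists>n g m h. x = NC n g m h}" unfolding z_def by blast
  next
    fix x assume xQ: "x \<in> Q"
    then consider s where "x = NA s" | f where "x = NB f" using H by blast
    then show "(x, z) \<in> R"
    proof cases
      case 1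
      then have "s \<in> set xs" using xs xQ by auto
      then obtain i where "i < length xs" "s = xs ! i" by (metis in_set_conv_nth)
      then show ?thesis unfolding z_def 1 R_iff by auto
    next
      case 2
      then have "f \<in> set ys" using ys xQ by auto
      then obtain i where "i < length ys" "f = ys ! i" by (metis in_set_conv_nth)
      then show ?thesis unfolding z_def 2 R_iff by (auto intro!: exI[of _ i])
    qed
  next
    have "fq \<noteq> (if j < length ys then ys ! j else w)" for j
    proof (cases "j < length ys")
      case True
      then have "ys ! j \<in> set ys" by simp
      then have "NB (ys ! j) \<in> Q" using ys by auto
      then show ?thesis using True H q by auto
    qed (use wne in auto)
    then show "(q, z) \<notin> R" unfolding q z_def R_iff by auto
  qed
qed


fun code :: "node \<Rightarrow> nat \<Rightarrow> nat \<Rightarrow> nat set" where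
  "code (NA s) i j = (if i = 0 then {0} else s)"
| "code (NB f) i j = (if i = 0 then {1} else f j)"
| "code (NC n g m h) i j = (if i = 0 then {2} else if i = 1 then {n} else if i = 2 then {m}
     else if i = 3 then g j else h (i - 4) j)"

lemma inj_code: "inj code"
proof (rule injI)
  fix x y assume E: "code x = code y"
  then have c: "\<And>i j. code x i j = code y i j" by simp
  show "x = y"
  proof (cases x)
    case (NA s)
    then show ?thesis using c[of 0 0] c[of 1 0]
      by (cases y) auto
  next
    case (NB f)
    then show ?thesis using c[of 0 0] c[of 1]
      by (cases y) (auto simp: fun_eq_iff)
  next
    case (NC n g m h)
    show ?thesis
    proof (cases y)
      case (NC n' g' m' h')
      have "n = n'" using c[of 1 0] NC \<open>x = NC n g m h\<close> by simp
      moreover have "m = m'" using c[of 2 0] NC \<open>x = NC n g m h\<close> by simp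
      moreover have "g = g'" using c[of 3] NC \<open>x = NC n g m h\<close> by (simp add: fun_eq_iff)
      moreover have "h = h'"
      proof (intro ext)
        fix k j show "h k j = h' k j" using c[of "k + 4" j] NC \<open>x = NC n g m h\<close> by simp
      qed
      ultimately show ?thesis using NC \<open>x = NC n g m h\<close> by simp
    qed (use c[of 0 0] NC in auto)
  qed
qed

definition flat :: "(nat \<Rightarrow> nat \<Rightarrow> nat set) \<Rightarrow> nat set" where
  "flat F = {prod_encode (prod_encode (i, j), k) | i j k. k \<in> F i j}"

lemma flat_mem: "prod_encode (prod_encode (i, j), k) \<in> flat F \<longleftrightarrow> k \<in> F i j"
  unfolding flat_def by (auto simp: prod_encode_eq)

lemma inj_flat: "inj flat"
proof (rule injI)
  fix F G assume "flat F = flat G"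
  then have "k \<in> F i j \<longleftrightarrow> k \<in> G i j" for i j k by (metis flat_mem)
  then show "F = G" by (intro ext) blast
qed

lemma node_real: "\<exists>e :: node \<Rightarrow> real. inj e"
proof -
  obtain b :: "nat set \<Rightarrow> real" where "bij_betw b UNIV UNIV"
    using nat_sets_eqpoll_reals unfolding eqpoll_def by blast
  then have "inj b" by (simp add: bij_betw_def)
  then have "inj (b \<circ> flat \<circ> code)" using inj_flat inj_code by (simp add: inj_compose)
  then show ?thesis by blast
qed

lemma real_lepoll_NA: "(UNIV :: real set) \<lesssim> range NA"
proof -
  obtain c :: "real \<Rightarrow> nat set" where "bij_betw c UNIV UNIV"
    using eqpoll_sym[OF nat_sets_eqpoll_reals] unfolding eqpoll_def by blast
  then have "inj c" by (simp add: bij_betw_def)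
  then have "inj (NA \<circ> c)" by (simp add: inj_compose inj_def)
  then show ?thesis unfolding lepoll_def by (intro exI[of _ "NA \<circ> c"]) auto
qed


theorem lemma3p2:
  shows "\<exists>(P :: real set) (r :: real rel).
     partial_order_on P r \<and>
     locally_countable P r \<and> P \<approx> (UNIV :: real set) \<and> has_height P r 3 \<and>
     level1 P r \<approx> (UNIV :: real set) \<and>
     (\<forall>A. A \<subseteq> level1 P r \<and> countable A \<longrightarrow>
          (\<exists>u\<in>level2 P r. \<forall>a\<in>A. (a, u) \<in> r)) \<and>
     (\<forall>Q q. finite Q \<and> Q \<subseteq> level1 P r \<union> level2 P r \<and> q \<in> level2 P r \<and> q \<notin> Q \<longrightarrow>
          (\<exists>z\<in>level3 P r. (\<forall>x\<in>Q. (x, z) \<in> r) \<and> (q, z) \<notin> r))"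
proof -
  obtain e :: "node \<Rightarrow> real" where inj: "inj e" using node_real by blast
  interpret I: tr e R by (unfold_locales) (rule inj)
  let ?P = "range e" and ?r = "I.rr"
  have L1: "level1 ?P ?r = e ` range NA" using I.l1 lev1 by simp
  have L2: "level2 ?P ?r = e ` range NB" using I.l2 lev2 by simp
  have L3: "level3 ?P ?r = e ` {x. \<exists>n g m h. x = NC n g m h}" using I.l3 lev3 by simp
  have injNA: "inj_on e (range NA)" using inj by (rule inj_on_subset) simp
  have rl: "(UNIV :: real set) \<lesssim> e ` range NA"
    using real_lepoll_NA injNA by simp
  have c1: "?P \<approx> (UNIV :: real set)"
  proof (rule lepoll_antisym)
    show "?P \<lesssim> (UNIV :: real set)" by (rule subset_imp_lepoll) simp
    have "e ` range NA \<lesssim> ?P" by (rule subset_imp_lepoll) auto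
    then show "(UNIV :: real set) \<lesssim> ?P" using rl by (rule lepoll_trans[rotated])
  qed
  have c2: "level1 ?P ?r \<approx> (UNIV :: real set)" unfolding L1
  proof (rule lepoll_antisym)
    show "e ` range NA \<lesssim> (UNIV :: real set)" by (rule subset_imp_lepoll) simp
    show "(UNIV :: real set) \<lesssim> e ` range NA" by (rule rl)
  qed
  have c3: "\<forall>A. A \<subseteq> level1 ?P ?r \<and> countable A \<longrightarrow> (\<exists>u\<in>level2 ?P ?r. \<forall>a\<in>A. (a, u) \<in> ?r)"
  proof (intro allI impI)
    fix A assume H: "A \<subseteq> level1 ?P ?r \<and> countable A"
    define A' where "A' = e -` A"
    have "A \<subseteq> range e" using H L1 by auto
    then have AA: "A = e ` A'" unfolding A'_def by blast
    have sub: "A' \<subseteq> range NA"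
    proof
      fix x assume "x \<in> A'" then have "e x \<in> e ` range NA" using H L1 unfolding A'_def by auto
      then show "x \<in> range NA" using inj_image_mem_iff[OF inj] by blast
    qed
    have "countable A'" using H AA inj by (metis countable_image_inj_on inj_on_subset subset_UNIV)
    then have "\<exists>u\<in>range NB. \<forall>a\<in>A'. (a, u) \<in> R" using sub by (intro cond3[rule_format]) simp
    then obtain u where u: "u \<in> range NB" "\<forall>a\<in>A'. (a, u) \<in> R" by blast
    show "\<exists>u\<in>level2 ?P ?r. \<forall>a\<in>A. (a, u) \<in> ?r"
      using u unfolding L2 AA by auto
  qed
  have c4: "\<forall>Q q. finite Q \<and> Q \<subseteq> level1 ?P ?r \<union> level2 ?P ?r \<and> q \<in> level2 ?P ?r \<and> q \<notin> Q \<longrightarrow>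
          (\<exists>z\<in>level3 ?P ?r. (\<forall>x\<in>Q. (x, z) \<in> ?r) \<and> (q, z) \<notin> ?r)"
  proof (intro allI impI)
    fix Q q assume H: "finite Q \<and> Q \<subseteq> level1 ?P ?r \<union> level2 ?P ?r \<and> q \<in> level2 ?P ?r \<and> q \<notin> Q"
    define Q' where "Q' = e -` Q"
    have "Q \<subseteq> range e" using H L1 L2 by auto
    then have QQ: "Q = e ` Q'" unfolding Q'_def by blast
    have fQ: "finite Q'" unfolding Q'_def using H inj by (intro finite_vimageI) auto
    have sub: "Q' \<subseteq> range NA \<union> range NB"
    proof
      fix x assume "x \<in> Q'" then have "e x \<in> e ` (range NA \<union> range NB)" using H L1 L2 unfolding Q'_def by auto
      then show "x \<in> range NA \<union> range NB" using inj_image_mem_iff[OF inj] by blast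
    qed
    obtain q' where q: "q = e q'" "q' \<in> range NB" using H L2 by blast
    have "q' \<notin> Q'" using H q unfolding Q'_def by simp
    then have "\<exists>z\<in>{x. \<exists>n g m h. x = NC n g m h}. (\<forall>x\<in>Q'. (x, z) \<in> R) \<and> (q', z) \<notin> R"
      using fQ sub q(2) by (intro cond4[rule_format]) simp
    then obtain z where z: "z \<in> {x. \<exists>n g m h. x = NC n g m h}" "\<forall>x\<in>Q'. (x, z) \<in> R" "(q', z) \<notin> R"
      by blast
    show "\<exists>z\<in>level3 ?P ?r. (\<forall>x\<in>Q. (x, z) \<in> ?r) \<and> (q, z) \<notin> ?r"
      unfolding L3 QQ q(1)
    proof (rule bexI[of _ "e z"])
      show "e z \<in> e ` {x. \<exists>n g m h. x = NC n g m h}" using z(1) by (rule imageI)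
      show "(\<forall>x\<in>e ` Q'. (x, e z) \<in> I.rr) \<and> (e q', e z) \<notin> I.rr" using z(2,3) by simp
    qed
  qed
  have p1: "partial_order_on ?P ?r" by (rule I.po[OF po])
  have p2: "locally_countable ?P ?r" by (rule I.lc[OF lc])
  have p3: "has_height ?P ?r 3" by (rule I.height[OF height])
  show ?thesis
    by (intro exI[of _ ?P] exI[of _ ?r] conjI p1 p2 c1 p3 c2 c3 c4)
qed

end
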